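(* If a Banach space $X$ has a seminormalized (Schauder) basis $(e_n)$ which dominates each of its subsequences (i.e., for every increasing sequence $(k_n)$ of positive integers, $(e_n)$ dominates $(e_{k_n})$), then $\mathcal{L}(X)$ is non-separable.
   Context: $\mathcal{L}(X)$ is the space of all bounded linear operators on $X$ with the operator norm. A sequence $(e_n)$ is seminormalized if $0<\inf_n\|e_n\|\le\sup_n\|e_n\|<\infty$. $(x_n)$ dominates $(y_n)$ if there is $C>0$ with $\|\sum a_ny_n\|\le C\|\sum a_nx_n\|$ for all finitely supported scalar sequences $(a_n)$. *)

theory Defs
  imports "HOL-Analysis.Analysis"
begin

definition schauder_basis :: "(nat \<Rightarrow> 'a::banach) \<Rightarrow> bool" where
  "schauder_basis e \<longleftrightarrow>
     (\<forall>x. \<exists>!a::nat \<Rightarrow> real. (\<lambda>N. \<Sum>n<N. a n *\<^sub>R e n) \<longlonglongrightarrow> x)"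

definition seminormalized :: "(nat \<Rightarrow> 'a::real_normed_vector) \<Rightarrow> bool" where
  "seminormalized e \<longleftrightarrow> (\<exists>c>0. \<forall>n. c \<le> norm (e n)) \<and> (\<exists>M. \<forall>n. norm (e n) \<le> M)"

definition dominates :: "(nat \<Rightarrow> 'a::real_normed_vector) \<Rightarrow> (nat \<Rightarrow> 'a) \<Rightarrow> bool" where
  "dominates x y \<longleftrightarrow> (\<exists>C>0. \<forall>a::nat \<Rightarrow> real. finite {n. a n \<noteq> 0} \<longrightarrow>
      norm (\<Sum>n\<in>{n. a n \<noteq> 0}. a n *\<^sub>R y n) \<le> C * norm (\<Sum>n\<in>{n. a n \<noteq> 0}. a n *\<^sub>R x n))"

end

theory Submission
  imports Defs
begin


primrec aseq :: "('a \<Rightarrow> real \<Rightarrow> 'a) \<Rightarrow> 'a \<Rightarrow> real \<Rightarrow> nat \<Rightarrow> 'a::real_normed_vector" where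
  "aseq Z x t 0 = x"
| "aseq Z x t (Suc j) = aseq Z x t j - Z (aseq Z x t j) (t / 2 ^ Suc j)"

locale sbasis =
  fixes e :: "nat \<Rightarrow> 'a::banach"
  assumes sb: "schauder_basis e" and nz: "\<And>n. e n \<noteq> 0"
begin

definition coef :: "nat \<Rightarrow> 'a \<Rightarrow> real" where
  "coef n x = (THE a. (\<lambda>N. \<Sum>n<N. a n *\<^sub>R e n) \<longlonglongrightarrow> x) n"

definition S :: "nat \<Rightarrow> 'a \<Rightarrow> 'a" where
  "S N x = (\<Sum>n<N. coef n x *\<^sub>R e n)"

lemma coef_fun: "(\<lambda>n. coef n x) = (THE a. (\<lambda>N. \<Sum>n<N. a n *\<^sub>R e n) \<longlonglongrightarrow> x)"
  by (simp add: coef_def)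

lemma S_lim: "(\<lambda>N. S N x) \<longlonglongrightarrow> x"
proof -
  have "\<exists>!a::nat \<Rightarrow> real. (\<lambda>N. \<Sum>n<N. a n *\<^sub>R e n) \<longlonglongrightarrow> x" using sb schauder_basis_def by blast
  from theI'[OF this] show ?thesis unfolding S_def coef_def by simp
qed

lemma coef_unique:
  assumes "(\<lambda>N. \<Sum>n<N. a n *\<^sub>R e n) \<longlonglongrightarrow> x"
  shows "coef n x = a n"
proof -
  have ex: "\<exists>!a::nat \<Rightarrow> real. (\<lambda>N. \<Sum>n<N. a n *\<^sub>R e n) \<longlonglongrightarrow> x" using sb schauder_basis_def by blast
  have "(THE a. (\<lambda>N. \<Sum>n<N. a n *\<^sub>R e n) \<longlonglongrightarrow> x) = a"
    by (rule the1_equality[where P="\<lambda>a. (\<lambda>N. \<Sum>n<N. a n *\<^sub>R e n) \<longlonglongrightarrow> x", OF ex assms])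
  then show ?thesis unfolding coef_def by simp
qed

lemma coef_add: "coef n (x + y) = coef n x + coef n y"
proof -
  have "(\<lambda>N. S N x + S N y) \<longlonglongrightarrow> x + y" by (intro tendsto_add S_lim)
  then have "(\<lambda>N. \<Sum>n<N. (coef n x + coef n y) *\<^sub>R e n) \<longlonglongrightarrow> x + y"
    by (simp add: S_def scaleR_add_left sum.distrib)
  from coef_unique[OF this] show ?thesis .
qed

lemma coef_scale: "coef n (t *\<^sub>R x) = t * coef n x"
proof -
  have "(\<lambda>N. t *\<^sub>R S N x) \<longlonglongrightarrow> t *\<^sub>R x" by (intro tendsto_scaleR tendsto_const S_lim)
  then have "(\<lambda>N. \<Sum>n<N. (t * coef n x) *\<^sub>R e n) \<longlonglongrightarrow> t *\<^sub>R x"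
    by (simp add: S_def scaleR_sum_right)
  from coef_unique[OF this] show ?thesis .
qed

lemma coef_minus: "coef n (- x) = - coef n x"
  using coef_scale[of n "-1" x] by simp

lemma coef_diff: "coef n (x - y) = coef n x - coef n y"
  using coef_add[of n x "-y"] coef_minus[of n y] by simp

lemma coef_zero: "coef n 0 = 0"
  using coef_scale[of n 0 0] by simp

lemma coef_e: "coef m (e n) = (if m = n then 1 else 0)"
proof -
  let ?a = "\<lambda>m. if m = n then 1 else (0::real)"
  have "eventually (\<lambda>N. (\<Sum>m<N. ?a m *\<^sub>R e m) = e n) sequentially"
    using eventually_ge_at_top[of "Suc n"]
  proof eventually_elim
    case (elim N)
    have "(\<Sum>m<N. ?a m *\<^sub>R e m) = (\<Sum>m<N. if m = n then e n else 0)"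
      by (rule sum.cong) auto
    also have "\<dots> = e n" using elim by (simp add: sum.delta)
    finally show ?case .
  qed
  then have "(\<lambda>N. \<Sum>m<N. ?a m *\<^sub>R e m) \<longlonglongrightarrow> e n"
    by (rule tendsto_eventually)
  from coef_unique[OF this] show ?thesis by simp
qed

lemma S_add: "S N (x + y) = S N x + S N y"
  by (simp add: S_def coef_add scaleR_add_left sum.distrib)
lemma S_diff: "S N (x - y) = S N x - S N y"
  by (simp add: S_def coef_diff scaleR_diff_left sum_subtractf)
lemma S_scale: "S N (t *\<^sub>R x) = t *\<^sub>R S N x"
  by (simp add: S_def coef_scale scaleR_sum_right)
lemma S_zero: "S N 0 = 0"
  by (simp add: S_def coef_zero)
lemma coef_S: "coef n x *\<^sub>R e n = S (Suc n) x - S n x"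
  by (simp add: S_def)

lemma S_bounded: "\<exists>B. \<forall>N. norm (S N x) \<le> B"
proof -
  have "convergent (\<lambda>N. S N x)" using S_lim convergent_def by blast
  then have "Bseq (\<lambda>N. S N x)" by (rule convergent_imp_Bseq)
  then show ?thesis by (auto simp: Bseq_def)
qed


definition D :: "nat \<Rightarrow> 'a set" where "D m = {z. \<forall>N. norm (S N z) \<le> real m}"

lemma baire_step: "\<exists>m x0 r. r > 0 \<and> ball x0 r \<subseteq> closure (D m)"
proof (rule ccontr)
  assume H: "\<not> ?thesis"
  have "euclidean interior_of \<Union>(range (\<lambda>m. closure (D m))) = {}"
  proof (rule Baire_category_alt)
    show "completely_metrizable_space (euclidean::'a topology) \<or> locally_compact_space (euclidean::'a topology) \<and> regular_space (euclidean::'a topology)"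
      using completely_metrizable_space_euclidean by blast
    show "countable (range (\<lambda>m. closure (D m)))" by simp
    fix T assume "T \<in> range (\<lambda>m. closure (D m))"
    then obtain m where T: "T = closure (D m)" by auto
    show "closedin euclidean T \<and> euclidean interior_of T = {}"
    proof
      show "closedin euclidean T" unfolding T by (simp add: closed_closedin[symmetric])
      show "euclidean interior_of T = {}"
      proof (rule ccontr)
        assume "euclidean interior_of T \<noteq> {}"
        then obtain x where "x \<in> interior T" by auto
        then obtain r where "r > 0" "ball x r \<subseteq> T" using mem_interior by blast
        with H T show False by blast
      qed
    qed
  qed
  moreover have "\<Union>(range (\<lambda>m. closure (D m))) = UNIV"
  proof -
    have "x \<in> \<Union>(range (\<lambda>m. closure (D m)))" for x
    proof -
      obtain B where B: "\<forall>N. norm (S N x) \<le> B" using S_bounded by blast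
      obtain m where "B \<le> real m" using real_arch_simple by blast
      with B have "x \<in> D m" unfolding D_def by (auto intro: order_trans)
      then show ?thesis using closure_subset by blast
    qed
    then show ?thesis by blast
  qed
  ultimately show False by simp
qed

lemma approx: "\<exists>M>0. \<forall>y \<epsilon>. \<epsilon> > 0 \<longrightarrow> (\<exists>z. (\<forall>N. norm (S N z) \<le> M * norm y) \<and> norm (y - z) < \<epsilon>)"
proof -
  obtain m x0 r where r: "r > 0" and bl: "ball x0 r \<subseteq> closure (D m)" using baire_step by blast
  have claim: "\<exists>z. (\<forall>N. norm (S N z) \<le> real m) \<and> norm (y - z) < \<epsilon>" if y: "norm y < r" and eps: "\<epsilon> > 0" for y \<epsilon>
  proof -
    have "x0 + y \<in> closure (D m)" using bl y by (auto simp: dist_norm)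
    then obtain u where u: "u \<in> D m" "dist u (x0 + y) < \<epsilon>" using eps closure_approachable by metis
    have "x0 - y \<in> closure (D m)" using bl y by (auto simp: dist_norm)
    then obtain v where v: "v \<in> D m" "dist v (x0 - y) < \<epsilon>" using eps closure_approachable by metis
    define z where "z = (1/2) *\<^sub>R (u - v)"
    have "norm (S N z) \<le> real m" for N
    proof -
      have "norm (S N z) = (1/2) * norm (S N u - S N v)" by (simp add: z_def S_scale S_diff)
      also have "\<dots> \<le> (1/2) * (norm (S N u) + norm (S N v))" by (simp add: norm_triangle_ineq4)
      also have "\<dots> \<le> (1/2) * (real m + real m)" using u v unfolding D_def
        by (intro mult_left_mono add_mono) auto
      finally show ?thesis by simp
    qed
    moreover have "norm (y - z) < \<epsilon>"
    proof -
      have "y - z = (1/2) *\<^sub>R ((x0 + y - u) - (x0 - y - v))"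
        by (simp add: z_def algebra_simps) (metis scaleR_add_left field_sum_of_halves scaleR_one)
      then have "norm (y - z) = (1/2) * norm ((x0 + y - u) - (x0 - y - v))" by simp
      also have "\<dots> \<le> (1/2) * (norm (x0 + y - u) + norm (x0 - y - v))"
        using norm_triangle_ineq4[of "x0 + y - u" "x0 - y - v"] by (intro mult_left_mono) auto
      also have "\<dots> < (1/2) * (\<epsilon> + \<epsilon>)" using u v by (simp add: dist_norm norm_minus_commute)
      finally show ?thesis by simp
    qed
    ultimately show ?thesis by blast
  qed
  define M where "M = 2 * real m / r + 1"
  have M: "M > 0" using r unfolding M_def by (simp add: add_nonneg_pos)
  have "\<exists>z. (\<forall>N. norm (S N z) \<le> M * norm y) \<and> norm (y - z) < \<epsilon>" if eps: "\<epsilon> > 0" for y \<epsilon>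
  proof (cases "y = 0")
    case True then show ?thesis using eps by (intro exI[of _ 0]) (simp add: S_zero)
  next
    case False
    then have ny: "norm y > 0" by simp
    define t where "t = r / (2 * norm y)"
    have t: "t > 0" using r ny by (simp add: t_def)
    have "norm (t *\<^sub>R y) < r" using r ny t by (simp add: t_def)
    then obtain z' where z': "\<forall>N. norm (S N z') \<le> real m" "norm (t *\<^sub>R y - z') < t * \<epsilon>"
      using claim[of "t *\<^sub>R y" "t * \<epsilon>"] t eps by auto
    define z where "z = (1/t) *\<^sub>R z'"
    have "norm (S N z) \<le> M * norm y" for N
    proof -
      have "norm (S N z) = (1/t) * norm (S N z')" using t by (simp add: z_def S_scale)
      also have "\<dots> \<le> (1/t) * real m" using z' t by (simp add: divide_right_mono)
      also have "\<dots> = 2 * real m / r * norm y" using r ny by (simp add: t_def)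
      also have "\<dots> \<le> M * norm y" using ny by (simp add: M_def distrib_right)
      finally show ?thesis .
    qed
    moreover have "norm (y - z) < \<epsilon>"
    proof -
      have "y - z = (1/t) *\<^sub>R (t *\<^sub>R y - z')" using t by (simp add: z_def algebra_simps)
      then have "norm (y - z) = (1/t) * norm (t *\<^sub>R y - z')" using t by simp
      also have "\<dots> < (1/t) * (t * \<epsilon>)" using z' t by (intro mult_strict_left_mono) auto
      finally show ?thesis using t by simp
    qed
    ultimately show ?thesis by blast
  qed
  with M show ?thesis by blast
qed



lemma basis_const: "\<exists>K>0. \<forall>x N. norm (S N x) \<le> K * norm x"
proof -
  obtain M where M: "M > 0" and A: "\<forall>y \<epsilon>. \<epsilon> > 0 \<longrightarrow> (\<exists>z. (\<forall>N. norm (S N z) \<le> M * norm y) \<and> norm (y - z) < \<epsilon>)"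
    using approx by blast
  define Z where "Z y \<epsilon> = (SOME z. (\<forall>N. norm (S N z) \<le> M * norm y) \<and> norm (y - z) < \<epsilon>)" for y \<epsilon>
  have Z: "(\<forall>N. norm (S N (Z y \<epsilon>)) \<le> M * norm y) \<and> norm (y - Z y \<epsilon>) < \<epsilon>" if "\<epsilon> > 0" for y \<epsilon>
    unfolding Z_def by (rule someI_ex) (use A that in blast)
  have main: "norm (S N x) \<le> (2 * M) * norm x" for x N
  proof (cases "x = 0")
    case True then show ?thesis by (simp add: S_zero)
  next
    case False
    then have nx: "norm x > 0" by simp
    define r where "r = aseq Z x (norm x)"
    define z where "z j = Z (r j) (norm x / 2 ^ Suc j)" for j
    have rS: "r (Suc j) = r j - z j" for j by (simp add: r_def z_def)
    have rb: "norm (r j) \<le> norm x / 2 ^ j" for j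
    proof (induction j)
      case 0 then show ?case by (simp add: r_def)
    next
      case (Suc j)
      have "norm (r j - z j) < norm x / 2 ^ Suc j" unfolding z_def using Z[of "norm x / 2 ^ Suc j" "r j"] nx by simp
      then show ?case by (simp add: rS)
    qed
    define g where "g j = M * norm x / 2 ^ j" for j
    have gsum: "g sums (2 * M * norm x)"
    proof -
      have "(\<lambda>j. (1/2::real) ^ j) sums (1 / (1 - 1/2))" by (rule geometric_sums) simp
      then have "(\<lambda>j. 1 / (2::real) ^ j) sums 2" by (simp add: power_divide)
      then have "(\<lambda>j. (M * norm x) * (1 / (2::real) ^ j)) sums ((M * norm x) * 2)" by (rule sums_mult)
      then show ?thesis unfolding g_def[abs_def] by (simp add: algebra_simps)
    qed
    then have gsm: "summable g" by (rule sums_summable)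
    have zS: "norm (S N (z j)) \<le> g j" for N j
    proof -
      have "norm (S N (z j)) \<le> M * norm (r j)" unfolding z_def using Z[of "norm x / 2 ^ Suc j" "r j"] nx by simp
      also have "\<dots> \<le> M * (norm x / 2 ^ j)" using rb M by (intro mult_left_mono) auto
      also have "\<dots> = g j" by (simp add: g_def)
      finally show ?thesis .
    qed
    have zsum: "(\<Sum>j<J. z j) = x - r J" for J
    proof (induction J)
      case 0 then show ?case by (simp add: r_def)
    next
      case (Suc J) then show ?case by (simp only: sum.lessThan_Suc rS) (simp add: algebra_simps)
    qed
    have rlim: "r \<longlonglongrightarrow> 0"
    proof (rule Lim_null_comparison)
      show "\<forall>\<^sub>F j in sequentially. norm (r j) \<le> norm x / 2 ^ j"
        using rb by simp
      show "(\<lambda>j. norm x / (2::real) ^ j) \<longlonglongrightarrow> 0"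
        using LIMSEQ_divide_realpow_zero[of 2 "norm x"] by simp
    qed
    have zlim: "(\<lambda>J. \<Sum>j<J. z j) \<longlonglongrightarrow> x"
    proof -
      have "(\<lambda>J. x - r J) \<longlonglongrightarrow> x - 0" by (intro tendsto_diff tendsto_const rlim)
      then show ?thesis by (simp add: zsum)
    qed
    define h where "h N = (\<Sum>j. S N (z j))" for N
    have unif: "uniform_limit UNIV (\<lambda>J N. \<Sum>j<J. S N (z j)) h sequentially"
      unfolding h_def[abs_def] by (rule Weierstrass_m_test[of UNIV "\<lambda>j N. S N (z j)" g, OF _ gsm]) (rule zS)
    have hlim: "h \<longlonglongrightarrow> x"
    proof (rule swap_uniform_limit'[OF _ zlim unif])
      show "\<forall>\<^sub>F J in sequentially. ((\<lambda>N. \<Sum>j<J. S N (z j)) \<longlongrightarrow> (\<Sum>j<J. z j)) sequentially"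
        by (intro always_eventually allI tendsto_sum S_lim)
    qed simp_all
    have csm: "summable (\<lambda>j. coef n (z j))" for n
    proof (rule summable_comparison_test)
      show "summable (\<lambda>j. 2 * g j / norm (e n))" using gsm by (intro summable_divide summable_mult)
      show "\<exists>N. \<forall>j\<ge>N. norm (coef n (z j)) \<le> 2 * g j / norm (e n)"
      proof (intro exI allI impI)
        fix j
        have "norm (coef n (z j)) * norm (e n) = norm (S (Suc n) (z j) - S n (z j))"
          by (simp flip: coef_S)
        also have "\<dots> \<le> norm (S (Suc n) (z j)) + norm (S n (z j))" by (rule norm_triangle_ineq4)
        also have "\<dots> \<le> 2 * g j" using zS[of "Suc n" j] zS[of n j] by simp
        finally show "norm (coef n (z j)) \<le> 2 * g j / norm (e n)"
          using nz[of n] by (simp add: field_simps)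
      qed
    qed
    have hN: "h N = (\<Sum>n<N. (\<Sum>j. coef n (z j)) *\<^sub>R e n)" for N
    proof -
      have "h N = (\<Sum>j. \<Sum>n<N. coef n (z j) *\<^sub>R e n)" by (simp add: h_def S_def)
      also have "\<dots> = (\<Sum>n<N. \<Sum>j. coef n (z j) *\<^sub>R e n)"
        by (rule suminf_sum) (intro summable_scaleR_left csm)
      also have "\<dots> = (\<Sum>n<N. (\<Sum>j. coef n (z j)) *\<^sub>R e n)"
        by (intro sum.cong refl) (rule suminf_scaleR_left[OF csm, symmetric])
      finally show ?thesis .
    qed
    have "coef n x = (\<Sum>j. coef n (z j))" for n
    proof -
      have hfun: "h = (\<lambda>N. \<Sum>n<N. (\<Sum>j. coef n (z j)) *\<^sub>R e n)" using hN by (intro ext) simp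
      show ?thesis by (rule coef_unique) (use hlim in \<open>simp add: hfun\<close>)
    qed
    then have "S N x = h N" by (simp add: S_def hN)
    also have "norm (h N) \<le> suminf g" unfolding h_def by (rule norm_suminf_le[OF zS gsm])
    also have "suminf g = 2 * M * norm x" using gsum by (rule sums_unique[symmetric])
    finally show ?thesis by simp
  qed
  show ?thesis using M main by (intro exI[of _ "2*M"]) auto
qed

end



lemma dom_finite:
  assumes "dominates x y"
  shows "\<exists>C>0. \<forall>A a. finite A \<longrightarrow> norm (\<Sum>n\<in>A. a n *\<^sub>R y n) \<le> C * norm (\<Sum>n\<in>A. a n *\<^sub>R x n)"
proof -
  obtain C where C: "C > 0" and H: "\<And>a::nat \<Rightarrow> real. finite {n. a n \<noteq> 0} \<Longrightarrow>
      norm (\<Sum>n\<in>{n. a n \<noteq> 0}. a n *\<^sub>R y n) \<le> C * norm (\<Sum>n\<in>{n. a n \<noteq> 0}. a n *\<^sub>R x n)"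
    using assms unfolding dominates_def by blast
  have "norm (\<Sum>n\<in>A. a n *\<^sub>R y n) \<le> C * norm (\<Sum>n\<in>A. a n *\<^sub>R x n)" if A: "finite A" for A a
  proof -
    define b where "b n = (if n \<in> A then a n else 0)" for n
    have sub: "{n. b n \<noteq> 0} \<subseteq> A" by (auto simp: b_def split: if_splits)
    then have fin: "finite {n. b n \<noteq> 0}" using A finite_subset by blast
    have eq: "(\<Sum>n\<in>A. a n *\<^sub>R z n) = (\<Sum>n\<in>{n. b n \<noteq> 0}. b n *\<^sub>R z n)" for z :: "nat \<Rightarrow> 'a"
    proof -
      have "(\<Sum>n\<in>A. a n *\<^sub>R z n) = (\<Sum>n\<in>A. b n *\<^sub>R z n)" by (intro sum.cong) (auto simp: b_def)
      also have "\<dots> = (\<Sum>n\<in>{n. b n \<noteq> 0}. b n *\<^sub>R z n)"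
        by (rule sum.mono_neutral_right[OF A sub]) auto
      finally show ?thesis .
    qed
    show ?thesis unfolding eq using H[OF fin] .
  qed
  with C show ?thesis by blast
qed

context sbasis begin

lemma sep:
  assumes c0: "c0 > 0" "\<And>n. c0 \<le> norm (e n)"
  shows "\<exists>\<delta>>0. \<forall>i j. i \<noteq> j \<longrightarrow> \<delta> \<le> norm (e i - e j)"
proof -
  obtain K where K: "K > 0" "\<And>x N. norm (S N x) \<le> K * norm x" using basis_const by blast
  have "c0 / (2 * K) \<le> norm (e i - e j)" if "i \<noteq> j" for i j
  proof -
    have ci: "coef i (e i - e j) = 1" using that by (simp add: coef_diff coef_e)
    have "norm (e i) = norm (S (Suc i) (e i - e j) - S i (e i - e j))"
      using coef_S[of i "e i - e j"] ci by simp
    also have "\<dots> \<le> norm (S (Suc i) (e i - e j)) + norm (S i (e i - e j))" by (rule norm_triangle_ineq4)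
    also have "\<dots> \<le> 2 * K * norm (e i - e j)" using K(2)[of "Suc i" "e i - e j"] K(2)[of i "e i - e j"] by simp
    finally have "c0 \<le> 2 * K * norm (e i - e j)" using c0(2)[of i] by simp
    then show ?thesis using K(1) by (simp add: field_simps)
  qed
  then show ?thesis using c0 K by (intro exI[of _ "c0 / (2 * K)"]) auto
qed

definition T :: "(nat \<Rightarrow> nat) \<Rightarrow> 'a \<Rightarrow> 'a" where
  "T k x = lim (\<lambda>N. \<Sum>n<N. coef n x *\<^sub>R e (k n))"

lemma T_props:
  assumes "dominates e (e \<circ> k)"
  shows "bounded_linear (T k)" "T k (e m) = e (k m)"
proof -
  obtain C where C: "C > 0" and H: "\<And>A a. finite A \<Longrightarrow> norm (\<Sum>n\<in>A. a n *\<^sub>R e (k n)) \<le> C * norm (\<Sum>n\<in>A. a n *\<^sub>R e n)"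
    using dom_finite[OF assms] by auto
  obtain K where K: "K > 0" "\<And>x N. norm (S N x) \<le> K * norm x" using basis_const by blast
  define P where "P N x = (\<Sum>n<N. coef n x *\<^sub>R e (k n))" for N x
  have split: "(\<Sum>n<N. f n) - (\<Sum>n<M. f n) = (\<Sum>n\<in>{M..<N}. f n)" if "M \<le> N" for M N and f :: "nat \<Rightarrow> 'a"
  proof -
    have "{..<N} = {..<M} \<union> {M..<N}" using that by auto
    then have "(\<Sum>n<N. f n) = (\<Sum>n<M. f n) + (\<Sum>n\<in>{M..<N}. f n)"
      by (simp add: sum.union_disjoint ivl_disj_int)
    then show ?thesis by simp
  qed
  have Pdiff: "norm (P N x - P M x) \<le> C * norm (S N x - S M x)" if "M \<le> N" for M N x
    unfolding P_def S_def split[OF that] by (rule H) simp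
  have Pdiff2: "norm (P N x - P M x) \<le> C * norm (S N x - S M x)" for M N x
  proof (cases "M \<le> N")
    case True then show ?thesis by (rule Pdiff)
  next
    case False
    then have "norm (P M x - P N x) \<le> C * norm (S M x - S N x)" by (intro Pdiff) simp
    then show ?thesis by (simp add: norm_minus_commute)
  qed
  have Pconv: "(\<lambda>N. P N x) \<longlonglongrightarrow> T k x" for x
  proof -
    have "Cauchy (\<lambda>N. S N x)" using S_lim by (rule LIMSEQ_imp_Cauchy)
    have "Cauchy (\<lambda>N. P N x)"
    proof (rule CauchyI)
      fix \<epsilon> :: real assume "\<epsilon> > 0"
      then have "\<epsilon> / C > 0" using C by simp
      then obtain M0 where M0: "\<And>m n. m \<ge> M0 \<Longrightarrow> n \<ge> M0 \<Longrightarrow> norm (S m x - S n x) < \<epsilon> / C"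
        using CauchyD[OF \<open>Cauchy (\<lambda>N. S N x)\<close>] by blast
      show "\<exists>M. \<forall>m\<ge>M. \<forall>n\<ge>M. norm (P m x - P n x) < \<epsilon>"
      proof (intro exI allI impI)
        fix m n assume "m \<ge> M0" "n \<ge> M0"
        have "norm (P m x - P n x) \<le> C * norm (S m x - S n x)" by (rule Pdiff2)
        also have "\<dots> < C * (\<epsilon> / C)" using M0[OF \<open>m \<ge> M0\<close> \<open>n \<ge> M0\<close>] C by (intro mult_strict_left_mono) auto
        finally show "norm (P m x - P n x) < \<epsilon>" using C by simp
      qed
    qed
    then have "convergent (\<lambda>N. P N x)" by (simp add: Cauchy_convergent_iff)
    then show ?thesis unfolding T_def P_def[abs_def] by (simp add: convergent_LIMSEQ_iff)
  qed
  show "bounded_linear (T k)"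
  proof (rule bounded_linear_intro)
    fix x y
    have "(\<lambda>N. P N x + P N y) \<longlonglongrightarrow> T k x + T k y" by (intro tendsto_add Pconv)
    moreover have "P N (x + y) = P N x + P N y" for N
      by (simp add: P_def coef_add scaleR_add_left sum.distrib)
    ultimately have "(\<lambda>N. P N (x + y)) \<longlonglongrightarrow> T k x + T k y" by simp
    then show "T k (x + y) = T k x + T k y" using Pconv LIMSEQ_unique by blast
  next
    fix r x
    have "(\<lambda>N. r *\<^sub>R P N x) \<longlonglongrightarrow> r *\<^sub>R T k x" by (intro tendsto_scaleR tendsto_const Pconv)
    moreover have "P N (r *\<^sub>R x) = r *\<^sub>R P N x" for N
      by (simp add: P_def coef_scale scaleR_sum_right)
    ultimately have "(\<lambda>N. P N (r *\<^sub>R x)) \<longlonglongrightarrow> r *\<^sub>R T k x" by simp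
    then show "T k (r *\<^sub>R x) = r *\<^sub>R T k x" using Pconv LIMSEQ_unique by blast
  next
    fix x
    have "norm (P N x) \<le> C * K * norm x" for N
    proof -
      have "norm (P N x) \<le> C * norm (S N x)" unfolding P_def S_def by (rule H) simp
      also have "\<dots> \<le> C * (K * norm x)" using K(2) C by (intro mult_left_mono) auto
      finally show ?thesis by simp
    qed
    then have "norm (T k x) \<le> C * K * norm x"
      by (intro LIMSEQ_le_const2[OF tendsto_norm[OF Pconv]]) auto
    then show "norm (T k x) \<le> norm x * (C * K)" by (simp add: mult.commute)
  qed
  have "eventually (\<lambda>N. P N (e m) = e (k m)) sequentially"
    using eventually_ge_at_top[of "Suc m"]
  proof eventually_elim
    case (elim N)
    have "P N (e m) = (\<Sum>n<N. if n = m then e (k m) else 0)"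
      unfolding P_def by (rule sum.cong) (auto simp: coef_e)
    also have "\<dots> = e (k m)" using elim by (simp add: sum.delta)
    finally show ?case .
  qed
  then have "(\<lambda>N. P N (e m)) \<longlonglongrightarrow> e (k m)" by (rule tendsto_eventually)
  then show "T k (e m) = e (k m)" using Pconv LIMSEQ_unique by blast
qed

end



lemma uncountable_nat_sets: "\<not> countable (UNIV :: nat set set)"
proof
  assume "countable (UNIV :: nat set set)"
  then have "range (from_nat_into (UNIV :: nat set set)) = UNIV" by (intro range_from_nat_into) auto
  then have "from_nat_into (UNIV :: nat set set) ` UNIV = Pow UNIV" by simp
  then show False using Cantors_theorem by blast
qed

theorem proposition2p3:
  fixes e :: "nat \<Rightarrow> 'a::banach"
  assumes "schauder_basis e"
    and "seminormalized e"
    and "\<And>k. strict_mono k \<Longrightarrow> dominates e (e \<circ> k)"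
  shows "\<not> separable_space (euclidean :: ('a \<Rightarrow>\<^sub>L 'a) topology)"
proof
  assume sepsp: "separable_space (euclidean :: ('a \<Rightarrow>\<^sub>L 'a) topology)"
  obtain c0 where c0: "c0 > 0" "\<And>n. c0 \<le> norm (e n)" using assms(2) unfolding seminormalized_def by blast
  obtain Mb where Mb: "\<And>n. norm (e n) \<le> Mb" using assms(2) unfolding seminormalized_def by blast
  have Mbpos: "Mb > 0" using c0(1) c0(2)[of 0] Mb[of 0] by linarith
  have nz: "e n \<noteq> 0" for n using c0(1) c0(2)[of n] by auto
  interpret sbasis e using assms(1) nz by unfold_locales auto
  obtain \<delta> where \<delta>: "\<delta> > 0" "\<And>i j. i \<noteq> j \<Longrightarrow> \<delta> \<le> norm (e i - e j)" using sep[OF c0] by blast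
  define kA where "kA A n = 2 * n + (if n \<in> A then 1 else (0::nat))" for A :: "nat set" and n
  have smono: "strict_mono (kA A)" for A
    unfolding strict_mono_Suc_iff kA_def by auto
  define Op where "Op A = Blinfun (T (kA A))" for A
  have Opapp: "blinfun_apply (Op A) = T (kA A)" for A
    unfolding Op_def by (rule bounded_linear_Blinfun_apply[OF T_props(1)[OF assms(3)[OF smono]]])
  have Ope: "blinfun_apply (Op A) (e m) = e (kA A m)" for A m
    unfolding Opapp by (rule T_props(2)[OF assms(3)[OF smono]])
  have Opsep: "\<delta> / Mb \<le> norm (Op A - Op B)" if neq: "A \<noteq> B" for A B
  proof -
    obtain m where m: "(m \<in> A) \<noteq> (m \<in> B)" using neq by blast
    then have km: "kA A m \<noteq> kA B m" unfolding kA_def by auto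
    have "\<delta> \<le> norm (e (kA A m) - e (kA B m))" using \<delta>(2)[OF km] .
    also have "\<dots> = norm (blinfun_apply (Op A - Op B) (e m))" by (simp add: blinfun.diff_left Ope)
    also have "\<dots> \<le> norm (Op A - Op B) * norm (e m)" by (rule norm_blinfun)
    also have "\<dots> \<le> norm (Op A - Op B) * Mb" by (intro mult_left_mono Mb) simp
    finally show ?thesis using Mbpos by (simp add: field_simps)
  qed
  obtain C where C: "countable C" "closure C = (UNIV :: ('a \<Rightarrow>\<^sub>L 'a) set)"
    using sepsp unfolding separable_space_def by auto
  have "\<exists>c\<in>C. dist c (Op A) < \<delta> / Mb / 2" for A
  proof -
    have "Op A \<in> closure C" using C(2) by simp
    then show ?thesis using \<delta>(1) Mbpos closure_approachable by (metis divide_pos_pos zero_less_numeral)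
  qed
  then obtain f where f: "\<And>A. f A \<in> C" "\<And>A. dist (f A) (Op A) < \<delta> / Mb / 2" by metis
  have "inj f"
  proof (rule injI)
    fix A B assume eq: "f A = f B"
    show "A = B"
    proof (rule ccontr)
      assume "A \<noteq> B"
      then have "\<delta> / Mb \<le> dist (Op A) (Op B)" using Opsep by (simp add: dist_norm)
      also have "\<dots> \<le> dist (f A) (Op A) + dist (f B) (Op B)" using eq by (metis dist_commute dist_triangle)
      also have "\<dots> < \<delta> / Mb / 2 + \<delta> / Mb / 2" using f(2)[of A] f(2)[of B] by simp
      finally show False by simp
    qed
  qed
  moreover have "countable (range f)" using f(1) C(1) by (meson countable_subset image_subsetI)
  ultimately have "countable (UNIV :: nat set set)" using countable_image_inj_on by blast
  then show False using uncountable_nat_sets by blast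
qed

end
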